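(* Let $\mathbf A=(A;\cdot,\to,\leadsto,1)$ be a pseudo-hoop and let $M\subseteq A$ be any subset. Define $f:M^\perp\times M^{\perp\perp}\to A$ by $f(x,y)=x\wedge y$. Then $f$ is injective and, for all $(x_1,y_1),(x_2,y_2)\in M^\perp\times M^{\perp\perp}$, $$f(x_1,y_1)\cdot f(x_2,y_2)=f(x_1\cdot x_2,\,y_1\cdot y_2),\quad f(x_1,y_1)\to f(x_2,y_2)=f(x_1\to x_2,\,y_1\to y_2),$$ $$f(x_1,y_1)\leadsto f(x_2,y_2)=f(x_1\leadsto x_2,\,y_1\leadsto y_2);$$ i.e. $f$ is an embedding of the direct product pseudo-hoop $M^\perp\times M^{\perp\perp}$ into $\mathbf A$.
   Context: A pseudo-hoop is an algebra $(A;\cdot,\to,\leadsto,1)$ of type $\langle 2,2,2,0\rangle$ such that for all $x,y,z\in A$: $x\cdot 1=x=1\cdot x$; $x\to x=1=x\leadsto x$; $(x\cdot y)\to z=x\to(y\to z)$; $(x\cdot y)\leadsto z=y\leadsto(x\leadsto z)$; and $(x\to y)\cdot x=(y\to x)\cdot y=x\cdot(x\leadsto y)=y\cdot(y\leadsto x)$. Setting $x\le y$ iff $x\to y=1$ (equivalently $x\leadsto y=1$) gives a partial order with greatest element $1$ in which $x\wedge y=(x\to y)\cdot x$ exists for all $x,y$. For $x,y\in A$, "$x\vee y=1$" means that the supremum of $\{x,y\}$ exists and equals $1$. For $M\subseteq A$, $M^\perp=\{x\in A\mid x\vee y=1\text{ for every }y\in M\}$ and $M^{\perp\perp}=(M^\perp)^\perp$.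 The sets $M^\perp$ and $M^{\perp\perp}$ contain $1$ and are closed under $\cdot,\to,\leadsto$, so $M^\perp\times M^{\perp\perp}$ is a pseudo-hoop with componentwise operations. *)

theory Defs
  imports Main
begin

locale pseudo_hoop =
  fixes mult :: "'a \<Rightarrow> 'a \<Rightarrow> 'a"
    and imp :: "'a \<Rightarrow> 'a \<Rightarrow> 'a"
    and limp :: "'a \<Rightarrow> 'a \<Rightarrow> 'a"
    and one :: "'a"
  assumes mult_one: "\<And>x. mult x one = x"
    and one_mult: "\<And>x. mult one x = x"
    and imp_self: "\<And>x. imp x x = one"
    and limp_self: "\<And>x. limp x x = one"
    and imp_mult: "\<And>x y z. imp (mult x y) z = imp x (imp y z)"
    and limp_mult: "\<And>x y z. limp (mult x y) z = limp y (limp x z)"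
    and divis1: "\<And>x y. mult (imp x y) x = mult (imp y x) y"
    and divis2: "\<And>x y. mult (imp y x) y = mult x (limp x y)"
    and divis3: "\<And>x y. mult x (limp x y) = mult y (limp y x)"

definition ph_le :: "('a \<Rightarrow> 'a \<Rightarrow> 'a) \<Rightarrow> 'a \<Rightarrow> 'a \<Rightarrow> 'a \<Rightarrow> bool" where
  "ph_le imp one x y \<longleftrightarrow> imp x y = one"

definition ph_meet :: "('a \<Rightarrow> 'a \<Rightarrow> 'a) \<Rightarrow> ('a \<Rightarrow> 'a \<Rightarrow> 'a) \<Rightarrow> 'a \<Rightarrow> 'a \<Rightarrow> 'a" where
  "ph_meet mult imp x y = mult (imp x y) x"

text \<open>"x \<or> y = 1": the supremum of {x,y} exists and equals 1, i.e. 1 is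
  the least upper bound of {x,y} w.r.t. ph_le.\<close>
definition ph_join_one :: "('a \<Rightarrow> 'a \<Rightarrow> 'a) \<Rightarrow> 'a \<Rightarrow> 'a \<Rightarrow> 'a \<Rightarrow> bool" where
  "ph_join_one imp one x y \<longleftrightarrow>
     ph_le imp one x one \<and> ph_le imp one y one \<and>
     (\<forall>z. ph_le imp one x z \<and> ph_le imp one y z \<longrightarrow> ph_le imp one one z)"

definition ph_perp :: "('a \<Rightarrow> 'a \<Rightarrow> 'a) \<Rightarrow> 'a \<Rightarrow> 'a set \<Rightarrow> 'a set" where
  "ph_perp imp one M = {x. \<forall>y\<in>M. ph_join_one imp one x y}"

end

theory Submission
  imports Defs
begin
context pseudo_hoop begin

lemma imp_one: "imp x one = one" by (metis divis1 divis2 imp_mult imp_self mult_one)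
lemma one_imp: "imp one x = x" by (metis limp_self mult_one divis1 imp_mult divis2)
lemma one_limp: "limp one x = x" by (metis divis3 limp_mult limp_self mult_one one_mult)
lemma limp_one: "limp x one = one" by (metis limp_self mult_one one_mult divis3 limp_mult)

lemma le_iff: "imp x y = one \<longleftrightarrow> limp x y = one"
proof
  assume a: "imp x y = one"
  have "mult one x = mult y (limp y x)" using divis2[where x=y and y=x] a by simp
  then have "x = mult y (limp y x)" by (simp add: one_mult)
  then have "limp x y = limp (limp y x) (limp y y)" by (metis limp_mult)
  then show "limp x y = one" by (simp add: limp_self limp_one)
next
  assume a: "limp x y = one"
  have "x = mult (imp y x) y" using divis2[where x=x and y=y] a by (simp add: mult_one)
  then have "imp x y = imp (imp y x) (imp y y)" by (metis imp_mult)
  then show "imp x y = one" by (simp add: imp_self imp_one)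
qed

lemma antisym: "imp x y = one \<Longrightarrow> imp y x = one \<Longrightarrow> x = y"
  using divis1[of x y] by (simp add: one_mult)

lemma trans: "imp x y = one \<Longrightarrow> imp y z = one \<Longrightarrow> imp x z = one"
proof -
  assume a: "imp x y = one" "imp y z = one"
  have "x = mult (imp y x) y" using divis1[of x y] a(1) by (simp add: one_mult)
  then have "imp x z = imp (imp y x) (imp y z)" by (metis imp_mult)
  then show ?thesis using a(2) by (simp add: imp_one)
qed

lemma resid_l: "imp (mult x y) z = one \<longleftrightarrow> imp x (imp y z) = one"
  by (simp add: imp_mult)
lemma resid_r: "imp (mult x y) z = one \<longleftrightarrow> imp y (limp x z) = one"
  by (simp add: le_iff limp_mult)

lemma le_one: "imp x one = one" by (rule imp_one)

lemma assoc: "mult (mult x y) z = mult x (mult y z)"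
proof -
  have e: "imp (mult (mult x y) z) w = imp (mult x (mult y z)) w" for w by (simp only: imp_mult)
  show ?thesis by (rule antisym) (simp only: e imp_self, simp only: e[symmetric] imp_self)
qed

lemma mono_mult_l: "imp a b = one \<Longrightarrow> imp (mult a c) (mult b c) = one"
proof -
  assume "imp a b = one"
  moreover have "imp b (imp c (mult b c)) = one" by (simp add: imp_mult[symmetric] imp_self)
  ultimately have "imp a (imp c (mult b c)) = one" by (rule trans)
  then show ?thesis by (simp add: imp_mult)
qed
lemma mono_mult_r: "imp a b = one \<Longrightarrow> imp (mult c a) (mult c b) = one"
proof -
  assume "imp a b = one"
  moreover have "imp b (limp c (mult c b)) = one" using resid_r[of c b "mult c b"] by (simp add: imp_self)
  ultimately have "imp a (limp c (mult c b)) = one" by (rule trans)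
  then show ?thesis by (simp add: resid_r)
qed
lemma mono_imp: "imp a b = one \<Longrightarrow> imp (imp c a) (imp c b) = one"
proof -
  assume "imp a b = one"
  have "imp (mult (imp c a) c) a = one" by (simp add: imp_mult imp_self)
  then have "imp (mult (imp c a) c) b = one" using \<open>imp a b = one\<close> by (rule trans)
  then show ?thesis by (simp add: imp_mult)
qed
lemma mono_limp: "imp a b = one \<Longrightarrow> imp (limp c a) (limp c b) = one"
proof -
  assume "imp a b = one"
  have "imp (mult c (limp c a)) a = one" using resid_r[of c "limp c a" a] by (simp add: imp_self)
  then have "imp (mult c (limp c a)) b = one" using \<open>imp a b = one\<close> by (rule trans)
  then show ?thesis by (simp add: resid_r)
qed

lemma meet_le1: "imp (mult (imp x y) x) x = one"
  by (simp add: imp_mult imp_self imp_one)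
lemma meet_le2: "imp (mult (imp x y) x) y = one"
  by (simp add: imp_mult imp_self)
lemma meet_glb: "imp z x = one \<Longrightarrow> imp z y = one \<Longrightarrow> imp z (mult (imp x y) x) = one"
proof -
  assume a: "imp z x = one" "imp z y = one"
  have "z = mult (imp x z) x" using divis1[of z x] a(1) by (simp add: one_mult)
  moreover have "imp (imp x z) (imp x y) = one" using a(2) by (rule mono_imp)
  ultimately show ?thesis by (metis mono_mult_l)
qed
lemma meet_unique: "imp m x = one \<Longrightarrow> imp m y = one \<Longrightarrow> (\<And>z. imp z x = one \<Longrightarrow> imp z y = one \<Longrightarrow> imp z m = one) \<Longrightarrow> m = mult (imp x y) x"
  by (metis antisym meet_le1 meet_le2 meet_glb)

abbreviation "j1 x y \<equiv> ph_join_one imp one x y"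
abbreviation "mt x y \<equiv> ph_meet mult imp x y"

lemma j1_def: "j1 x y \<longleftrightarrow> (\<forall>z. imp x z = one \<and> imp y z = one \<longrightarrow> imp one z = one)"
  by (simp add: ph_join_one_def ph_le_def imp_one)

lemma le_imp: "imp y (imp x y) = one"
  by (simp add: imp_mult[symmetric] resid_r limp_self imp_one)
lemma le_limp: "imp y (limp x y) = one"
  by (simp add: resid_r[symmetric] imp_mult imp_self imp_one)

lemma j1_sym: "j1 x y \<Longrightarrow> j1 y x" by (auto simp: j1_def)

lemma j1_imp: assumes "j1 x y" shows "imp x y = y"
proof -
  let ?a = "imp x y"
  have "imp (mult ?a x) y = one" by (simp add: imp_mult imp_self)
  then have 1: "imp x (limp ?a y) = one" by (simp add: resid_r)
  have 2: "imp y (limp ?a y) = one" by (rule le_limp)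
  have "imp one (limp ?a y) = one" using assms 1 2 by (auto simp: j1_def)
  then have "limp ?a y = one" by (simp add: one_imp)
  then have 3: "imp ?a y = one" by (simp add: le_iff)
  have "imp (mult y x) y = one" by (simp add: resid_r limp_self imp_one)
  then have 4: "imp y ?a = one" by (simp add: resid_l)
  show ?thesis using 3 4 antisym by blast
qed

lemma j1_limp: assumes "j1 x y" shows "limp x y = y"
proof -
  let ?a = "limp x y"
  have "imp (mult x ?a) y = one" by (simp add: resid_r imp_self)
  then have 1: "imp x (imp ?a y) = one" by (simp add: resid_l)
  have 2: "imp y (imp ?a y) = one" by (rule le_imp)
  have "imp one (imp ?a y) = one" using assms 1 2 by (auto simp: j1_def)
  then have 3: "imp ?a y = one" by (simp add: one_imp)
  have "imp (mult x y) y = one" by (simp add: imp_mult imp_self imp_one)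
  then have 4: "imp y ?a = one" by (simp add: resid_r)
  show ?thesis using 3 4 antisym by blast
qed

lemma j1_up: "j1 y z \<Longrightarrow> imp y w = one \<Longrightarrow> j1 w z"
  unfolding j1_def
proof (intro allI impI)
  fix u assume a: "\<forall>u. imp y u = one \<and> imp z u = one \<longrightarrow> imp one u = one" "imp y w = one"
    and u: "imp w u = one \<and> imp z u = one"
  then have "imp y u = one" using trans by blast
  then show "imp one u = one" using a u by blast
qed

lemma j1_one: "j1 one z" by (simp add: j1_def)

lemma j1_mult: assumes "j1 x z" "j1 y z" shows "j1 (mult x y) z"
  unfolding j1_def
proof (intro allI impI)
  fix u assume u: "imp (mult x y) u = one \<and> imp z u = one"
  have "imp x (imp y u) = one" using u by (simp add: imp_mult)
  moreover have "imp z (imp y u) = one"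
    using u trans[of z u "imp y u"] le_imp by blast
  ultimately have "imp one (imp y u) = one" using assms(1) by (auto simp: j1_def)
  then have "imp y u = one" by (simp add: one_imp)
  then show "imp one u = one" using assms(2) u by (auto simp: j1_def)
qed


lemma j1_imp2: "j1 y z \<Longrightarrow> j1 (imp x y) z" using j1_up le_imp by blast
lemma j1_limp2: "j1 y z \<Longrightarrow> j1 (limp x y) z" using j1_up le_limp by blast

lemma mt_j1: "j1 x y \<Longrightarrow> mt x y = mult x y"
proof -
  assume j: "j1 x y"
  have "mt x y = mult (imp x y) x" by (simp add: ph_meet_def)
  also have "\<dots> = mult (imp y x) y" by (rule divis1)
  also have "\<dots> = mult x (limp x y)" by (rule divis2)
  also have "\<dots> = mult x y" using j1_limp[OF j] by simp
  finally show ?thesis .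
qed
lemma mt_j1': "j1 x y \<Longrightarrow> mt x y = mult y x"
  by (simp add: ph_meet_def j1_imp)

lemma mt_le1: "imp (mt x y) x = one" by (simp add: ph_meet_def meet_le1)
lemma mt_le2: "imp (mt x y) y = one" by (simp add: ph_meet_def meet_le2)
lemma mt_one1: "mt one y = y" by (simp add: ph_meet_def one_imp mult_one)
lemma mt_one2: "mt x one = x" by (simp add: ph_meet_def imp_one one_mult)

lemma imp_mt: "imp z (mt c d) = mt (imp z c) (imp z d)"
  unfolding ph_meet_def
proof (rule meet_unique)
  show "imp (imp z (mult (imp c d) c)) (imp z c) = one" by (rule mono_imp[OF meet_le1])
  show "imp (imp z (mult (imp c d) c)) (imp z d) = one" by (rule mono_imp[OF meet_le2])
  fix w assume "imp w (imp z c) = one" "imp w (imp z d) = one"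
  then have "imp (mult w z) c = one" "imp (mult w z) d = one" by (simp_all add: imp_mult)
  then have "imp (mult w z) (mult (imp c d) c) = one" by (rule meet_glb)
  then show "imp w (imp z (mult (imp c d) c)) = one" by (simp add: imp_mult)
qed

lemma limp_mt: "limp z (mt c d) = mt (limp z c) (limp z d)"
  unfolding ph_meet_def
proof (rule meet_unique)
  show "imp (limp z (mult (imp c d) c)) (limp z c) = one" by (rule mono_limp[OF meet_le1])
  show "imp (limp z (mult (imp c d) c)) (limp z d) = one" by (rule mono_limp[OF meet_le2])
  fix w assume "imp w (limp z c) = one" "imp w (limp z d) = one"
  then have "imp (mult z w) c = one" "imp (mult z w) d = one" by (simp_all add: resid_r)
  then have "imp (mult z w) (mult (imp c d) c) = one" by (rule meet_glb)
  then show "imp w (limp z (mult (imp c d) c)) = one" by (simp add: resid_r)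
qed

lemma hom_mult: "j1 a b \<Longrightarrow> j1 c d \<Longrightarrow> j1 b c \<Longrightarrow> j1 (mult a c) (mult b d) \<Longrightarrow>
   mult (mt a b) (mt c d) = mt (mult a c) (mult b d)"
proof -
  assume j: "j1 a b" "j1 c d" "j1 b c" "j1 (mult a c) (mult b d)"
  have bc: "mult b c = mult c b" using mt_j1[OF j(3)] mt_j1'[OF j(3)] by simp
  have "mult (mt a b) (mt c d) = mult (mult a b) (mult c d)" using mt_j1[OF j(1)] mt_j1[OF j(2)] by simp
  also have "\<dots> = mult a (mult (mult b c) d)" by (simp only: assoc)
  also have "\<dots> = mult (mult a c) (mult b d)" by (simp only: bc assoc)
  also have "\<dots> = mt (mult a c) (mult b d)" using mt_j1[OF j(4)] by simp
  finally show ?thesis .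
qed

lemma hom_imp: "j1 a b \<Longrightarrow> j1 b (imp a c) \<Longrightarrow> j1 a (imp b d) \<Longrightarrow>
   imp (mt a b) (mt c d) = mt (imp a c) (imp b d)"
proof -
  assume j: "j1 a b" "j1 b (imp a c)" "j1 a (imp b d)"
  have 1: "imp (mt a b) c = imp a c" using mt_j1'[OF j(1)] j1_imp[OF j(2)] by (simp add: imp_mult)
  have 2: "imp (mt a b) d = imp b d" using mt_j1[OF j(1)] j1_imp[OF j(3)] by (simp add: imp_mult)
  show ?thesis by (simp only: imp_mt 1 2)
qed

lemma hom_limp: "j1 a b \<Longrightarrow> j1 b (limp a c) \<Longrightarrow> j1 a (limp b d) \<Longrightarrow>
   limp (mt a b) (mt c d) = mt (limp a c) (limp b d)"
proof -
  assume j: "j1 a b" "j1 b (limp a c)" "j1 a (limp b d)"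
  have 1: "limp (mt a b) c = limp a c" using mt_j1[OF j(1)] j1_limp[OF j(2)] by (simp add: limp_mult)
  have 2: "limp (mt a b) d = limp b d" using mt_j1'[OF j(1)] j1_limp[OF j(3)] by (simp add: limp_mult)
  show ?thesis by (simp only: limp_mt 1 2)
qed
end

theorem theorem4p2:
  fixes mult imp limp :: "'a \<Rightarrow> 'a \<Rightarrow> 'a" and one :: 'a and M :: "'a set"
  assumes "pseudo_hoop mult imp limp one"
  defines "P \<equiv> ph_perp imp one M"
      and "Q \<equiv> ph_perp imp one (ph_perp imp one M)"
      and "f \<equiv> (\<lambda>(x, y). ph_meet mult imp x y)"
  shows "inj_on f (P \<times> Q) \<and>
         (\<forall>x1\<in>P. \<forall>y1\<in>Q. \<forall>x2\<in>P. \<forall>y2\<in>Q.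
           mult (f (x1, y1)) (f (x2, y2)) = f (mult x1 x2, mult y1 y2) \<and>
           imp (f (x1, y1)) (f (x2, y2)) = f (imp x1 x2, imp y1 y2) \<and>
           limp (f (x1, y1)) (f (x2, y2)) = f (limp x1 x2, limp y1 y2))"
proof -
  interpret pseudo_hoop mult imp limp one by fact
  have PQ: "j1 x y" if "x \<in> P" "y \<in> Q" for x y
    using that unfolding P_def Q_def ph_perp_def by (auto intro: j1_sym)
  have QP: "j1 y x" if "x \<in> P" "y \<in> Q" for x y using PQ[OF that] j1_sym by blast
  have Pm: "mult x y \<in> P" if "x \<in> P" "y \<in> P" for x y
    using that unfolding P_def ph_perp_def by (auto intro: j1_mult)
  have Qm: "mult x y \<in> Q" if "x \<in> Q" "y \<in> Q" for x y
    using that unfolding Q_def ph_perp_def by (auto intro: j1_mult)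
  have Pi: "imp x y \<in> P" "limp x y \<in> P" if "y \<in> P" for x y
    using that unfolding P_def ph_perp_def by (auto intro: j1_imp2 j1_limp2)
  have Qi: "imp x y \<in> Q" "limp x y \<in> Q" if "y \<in> Q" for x y
    using that unfolding Q_def ph_perp_def by (auto intro: j1_imp2 j1_limp2)
  have P1: "one \<in> P" unfolding P_def ph_perp_def by (auto intro: j1_one)
  have Q1: "one \<in> Q" unfolding Q_def ph_perp_def by (auto intro: j1_one)
  have H: "mult (f (x1, y1)) (f (x2, y2)) = f (mult x1 x2, mult y1 y2) \<and>
           imp (f (x1, y1)) (f (x2, y2)) = f (imp x1 x2, imp y1 y2) \<and>
           limp (f (x1, y1)) (f (x2, y2)) = f (limp x1 x2, limp y1 y2)"
    if "x1 \<in> P" "y1 \<in> Q" "x2 \<in> P" "y2 \<in> Q" for x1 y1 x2 y2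
    unfolding f_def prod.case
    using that
  proof (intro conjI)
    show "mult (mt x1 y1) (mt x2 y2) = mt (mult x1 x2) (mult y1 y2)"
      by (rule hom_mult[OF PQ[OF that(1,2)] PQ[OF that(3,4)] QP[OF that(3,2)]
            PQ[OF Pm[OF that(1,3)] Qm[OF that(2,4)]]])
    show "imp (mt x1 y1) (mt x2 y2) = mt (imp x1 x2) (imp y1 y2)"
      by (rule hom_imp[OF PQ[OF that(1,2)] QP[OF Pi(1)[OF that(3)] that(2)] PQ[OF that(1) Qi(1)[OF that(4)]]])
    show "limp (mt x1 y1) (mt x2 y2) = mt (limp x1 x2) (limp y1 y2)"
      by (rule hom_limp[OF PQ[OF that(1,2)] QP[OF Pi(2)[OF that(3)] that(2)] PQ[OF that(1) Qi(2)[OF that(4)]]])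
  qed
  have "inj_on f (P \<times> Q)"
  proof (rule inj_onI, clarify)
    fix x1 y1 x2 y2 assume a: "x1 \<in> P" "y1 \<in> Q" "x2 \<in> P" "y2 \<in> Q"
      and e: "f (x1, y1) = f (x2, y2)"
    have fx: "f (x, one) = x" "f (one, y) = y" for x y by (simp_all add: f_def mt_one1 mt_one2)
    have "imp (f (one, y1)) (f (x1, y1)) = f (x1, one)"
      using H[OF P1 a(2) a(1) a(2)] by (simp add: one_imp imp_self)
    moreover have "imp (f (one, y1)) (f (x2, y2)) = f (x2, imp y1 y2)"
      using H[OF P1 a(2) a(3) a(4)] by (simp add: one_imp)
    ultimately have "x1 = f (x2, imp y1 y2)" using e fx by simp
    then have l1: "imp x1 x2 = one" by (simp add: f_def mt_le1)
    have "imp (f (one, y2)) (f (x2, y2)) = f (x2, one)"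
      using H[OF P1 a(4) a(3) a(4)] by (simp add: one_imp imp_self)
    moreover have "imp (f (one, y2)) (f (x1, y1)) = f (x1, imp y2 y1)"
      using H[OF P1 a(4) a(1) a(2)] by (simp add: one_imp)
    ultimately have "x2 = f (x1, imp y2 y1)" using e fx by simp
    then have l2: "imp x2 x1 = one" by (simp add: f_def mt_le1)
    have "imp (f (x1, one)) (f (x1, y1)) = f (one, y1)"
      using H[OF a(1) Q1 a(1) a(2)] by (simp add: one_imp imp_self)
    moreover have "imp (f (x1, one)) (f (x2, y2)) = f (imp x1 x2, y2)"
      using H[OF a(1) Q1 a(3) a(4)] by (simp add: one_imp)
    ultimately have "y1 = f (imp x1 x2, y2)" using e fx by simp
    then have l3: "imp y1 y2 = one" by (simp add: f_def mt_le2)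
    have "imp (f (x2, one)) (f (x2, y2)) = f (one, y2)"
      using H[OF a(3) Q1 a(3) a(4)] by (simp add: one_imp imp_self)
    moreover have "imp (f (x2, one)) (f (x1, y1)) = f (imp x2 x1, y1)"
      using H[OF a(3) Q1 a(1) a(2)] by (simp add: one_imp)
    ultimately have "y2 = f (imp x2 x1, y1)" using e fx by simp
    then have l4: "imp y2 y1 = one" by (simp add: f_def mt_le2)
    show "x1 = x2 \<and> y1 = y2" using l1 l2 l3 l4 antisym by blast
  qed
  then show ?thesis using H by blast
qed

end
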